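(* Let $(L,\vee,\wedge,f,g,0,1)$ be a BDLGC-algebra. Then there exists a GC-frame $\mathcal{F}=(X,\leq,R)$ such that $(L,\vee,\wedge,f,g,0,1)$ is isomorphic to a subalgebra of the complex algebra $\mathbb{BDL}_{\rm GC}(\mathcal{F})=(\mathcal{T}_\leq,\cup,\cap,{}^\blacktriangle,{}^\blacktriangledown,\emptyset,X)$. If $L$ is finite, then $(L,\vee,\wedge,f,g,0,1)$ is isomorphic to $\mathbb{BDL}_{\rm GC}(\mathcal{F})$.
   Context: A BDLGC-algebra $(L,\vee,\wedge,f,g,0,1)$ is a bounded distributive lattice $(L,\vee,\wedge,0,1)$ with maps $f,g\colon L\to L$ forming an order-preserving Galois connection: $f(a)\leq b\iff a\leq g(b)$ for all $a,b\in L$. A GC-frame $(X,\leq,R)$ is a set $X$ with a quasiorder $\leq$ and a relation $R\subseteq X\times X$ such that $x\leq x'$, $x\,R\,y$, $y'\leq y$ imply $x'\,R\,y'$. $\mathcal{T}_\leq$ is the set of upward $\leq$-closed subsets of $X$. For $A\subseteq X$: $A^\blacktriangle=\{x\mid x\,R\,y\text{ for some }y\in A\}$ and $A^\blacktriangledown=\{x\mid \text{for all }y,\ y\,R\,x\text{ implies }y\in A\}$. The complex algebra $\mathbb{BDL}_{\rm GC}(\mathcal{F})$ is $(\mathcal{T}_\leq,\cup,\cap,{}^\blacktriangle,{}^\blacktriangledown,\emptyset,X)$; isomorphisms preserve $\vee,\wedge,f,g,0,1$ with $f\leftrightarrow{}^\blacktriangle$, $g\leftrightarrow{}^\blacktriangledown$.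 *)

theory Defs
  imports Main
begin

definition bdlgc :: "('a::{distrib_lattice,bounded_lattice} \<Rightarrow> 'a) \<Rightarrow> ('a \<Rightarrow> 'a) \<Rightarrow> bool" where
  "bdlgc f g \<longleftrightarrow> (\<forall>a b. f a \<le> b \<longleftrightarrow> a \<le> g b)"

definition gc_frame :: "'b set \<Rightarrow> ('b \<Rightarrow> 'b \<Rightarrow> bool) \<Rightarrow> ('b \<Rightarrow> 'b \<Rightarrow> bool) \<Rightarrow> bool" where
  "gc_frame X le R \<longleftrightarrow>
     (\<forall>x\<in>X. le x x) \<and>
     (\<forall>x\<in>X. \<forall>y\<in>X. \<forall>z\<in>X. le x y \<longrightarrow> le y z \<longrightarrow> le x z) \<and>
     (\<forall>x y. le x y \<longrightarrow> x \<in> X \<and> y \<in> X) \<and>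
     (\<forall>x y. R x y \<longrightarrow> x \<in> X \<and> y \<in> X) \<and>
     (\<forall>x x' y y'. le x x' \<longrightarrow> R x y \<longrightarrow> le y' y \<longrightarrow> R x' y')"

definition upsets :: "'b set \<Rightarrow> ('b \<Rightarrow> 'b \<Rightarrow> bool) \<Rightarrow> 'b set set" where
  "upsets X le = {A. A \<subseteq> X \<and> (\<forall>x\<in>A. \<forall>y\<in>X. le x y \<longrightarrow> y \<in> A)}"

definition btri_up :: "'b set \<Rightarrow> ('b \<Rightarrow> 'b \<Rightarrow> bool) \<Rightarrow> 'b set \<Rightarrow> 'b set" where
  "btri_up X R A = {x\<in>X. \<exists>y\<in>A. R x y}"

definition btri_down :: "'b set \<Rightarrow> ('b \<Rightarrow> 'b \<Rightarrow> bool) \<Rightarrow> 'b set \<Rightarrow> 'b set" where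
  "btri_down X R A = {x\<in>X. \<forall>y\<in>X. R y x \<longrightarrow> y \<in> A}"

text \<open>h is a homomorphism from (L,sup,inf,f,g,bot,top) into the complex algebra
  BDL_GC(X,le,R) = (upsets, union, inter, btri_up, btri_down, {}, X).\<close>
definition gc_hom :: "('a::{distrib_lattice,bounded_lattice} \<Rightarrow> 'a) \<Rightarrow> ('a \<Rightarrow> 'a) \<Rightarrow>
    'b set \<Rightarrow> ('b \<Rightarrow> 'b \<Rightarrow> bool) \<Rightarrow> ('b \<Rightarrow> 'b \<Rightarrow> bool) \<Rightarrow> ('a \<Rightarrow> 'b set) \<Rightarrow> bool" where
  "gc_hom f g X le R h \<longleftrightarrow>
     (\<forall>a. h a \<in> upsets X le) \<and>
     (\<forall>a b. h (sup a b) = h a \<union> h b) \<and>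
     (\<forall>a b. h (inf a b) = h a \<inter> h b) \<and>
     (\<forall>a. h (f a) = btri_up X R (h a)) \<and>
     (\<forall>a. h (g a) = btri_down X R (h a)) \<and>
     h bot = {} \<and> h top = X"

end

theory Submission
  imports Defs
begin

definition filt :: "'a::lattice set \<Rightarrow> bool" where
  "filt F \<longleftrightarrow> F \<noteq> {} \<and> (\<forall>x\<in>F. \<forall>y. x \<le> y \<longrightarrow> y \<in> F) \<and> (\<forall>x\<in>F. \<forall>y\<in>F. inf x y \<in> F)"

definition idl :: "'a::lattice set \<Rightarrow> bool" where
  "idl I \<longleftrightarrow> I \<noteq> {} \<and> (\<forall>x\<in>I. \<forall>y. y \<le> x \<longrightarrow> y \<in> I) \<and> (\<forall>x\<in>I. \<forall>y\<in>I. sup x y \<in> I)"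

definition pfilt :: "'a::{distrib_lattice,bounded_lattice} set \<Rightarrow> bool" where
  "pfilt P \<longleftrightarrow> filt P \<and> bot \<notin> P \<and> (\<forall>a b. sup a b \<in> P \<longrightarrow> a \<in> P \<or> b \<in> P)"

lemma filt_gen:
  fixes M :: "'a::lattice set"
  assumes fM: "filt M" shows "filt {x. \<exists>p\<in>M. inf p a \<le> x}"
  unfolding filt_def
proof (intro conjI ballI allI impI)
  obtain p where "p \<in> M" using fM unfolding filt_def by auto
  moreover have "inf p a \<le> inf p a" by (rule order_refl)
  ultimately have "inf p a \<in> {x. \<exists>p\<in>M. inf p a \<le> x}" by blast
  then show "{x. \<exists>p\<in>M. inf p a \<le> x} \<noteq> {}" by blast
next
  fix x y assume "x \<in> {x. \<exists>p\<in>M. inf p a \<le> x}" "x \<le> y"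
  then obtain p where p: "p \<in> M" "inf p a \<le> x" by blast
  have "inf p a \<le> y" using p(2) \<open>x \<le> y\<close> by (rule order_trans)
  then show "y \<in> {x. \<exists>p\<in>M. inf p a \<le> x}" using p(1) by blast
next
  fix x y assume "x \<in> {x. \<exists>p\<in>M. inf p a \<le> x}" "y \<in> {x. \<exists>p\<in>M. inf p a \<le> x}"
  then obtain p q where pq: "p\<in>M" "q\<in>M" "inf p a \<le> x" "inf q a \<le> y" by blast
  have m: "inf p q \<in> M" using fM pq(1,2) unfolding filt_def by blast
  have "inf (inf p q) a \<le> inf p a" by (intro inf_mono inf_le1 order_refl)
  then have 1: "inf (inf p q) a \<le> x" using pq(3) by (rule order_trans)
  have "inf (inf p q) a \<le> inf q a" by (intro inf_mono inf_le2 order_refl)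
  then have 2: "inf (inf p q) a \<le> y" using pq(4) by (rule order_trans)
  have "inf (inf p q) a \<le> inf x y" using 1 2 by (rule le_infI)
  then show "inf x y \<in> {x. \<exists>p\<in>M. inf p a \<le> x}" using m by blast
qed

lemma prime_sep:
  fixes F I :: "'a::{distrib_lattice,bounded_lattice} set"
  assumes F: "filt F" and I: "idl I" and disj: "F \<inter> I = {}"
  shows "\<exists>P. pfilt P \<and> F \<subseteq> P \<and> P \<inter> I = {}"
proof -
  let ?A = "{Q. filt Q \<and> F \<subseteq> Q \<and> Q \<inter> I = {}}"
  have "\<forall>C\<in>chains ?A. \<exists>U\<in>?A. \<forall>X\<in>C. X \<subseteq> U"
  proof
    fix C assume C: "C \<in> chains ?A"
    show "\<exists>U\<in>?A. \<forall>X\<in>C. X \<subseteq> U"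
    proof (cases "C = {}")
      case True then show ?thesis using F disj by auto
    next
      case False
      have sub: "C \<subseteq> ?A" and ch: "\<forall>x\<in>C. \<forall>y\<in>C. x \<subseteq> y \<or> y \<subseteq> x"
        using C unfolding chains_def chain_subset_def by auto
      have "filt (\<Union>C)"
        unfolding filt_def
      proof (intro conjI ballI allI impI)
        obtain Q where "Q \<in> C" using False by auto
        moreover have "Q \<noteq> {}" using sub \<open>Q \<in> C\<close> unfolding filt_def by blast
        ultimately show "\<Union>C \<noteq> {}" by blast
      next
        fix x y assume "x \<in> \<Union>C" "x \<le> y" then show "y \<in> \<Union>C" using sub unfolding filt_def by blast
      next
        fix x y assume "x \<in> \<Union>C" "y \<in> \<Union>C"
        then obtain Q1 Q2 where "Q1 \<in> C" "Q2 \<in> C" "x \<in> Q1" "y \<in> Q2" by blast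
        then have "x \<in> Q2 \<and> y \<in> Q2 \<and> Q2 \<in> C \<or> x \<in> Q1 \<and> y \<in> Q1 \<and> Q1 \<in> C" using ch by blast
        moreover have "\<And>Q. Q \<in> C \<Longrightarrow> filt Q" using sub by blast
        ultimately show "inf x y \<in> \<Union>C" unfolding filt_def by blast
      qed
      moreover have "F \<subseteq> \<Union>C" using False sub by blast
      moreover have "\<Union>C \<inter> I = {}" using sub by blast
      ultimately show ?thesis by blast
    qed
  qed
  from Zorn_Lemma2[OF this] obtain M where M: "M \<in> ?A" and max: "\<forall>X\<in>?A. M \<subseteq> X \<longrightarrow> X = M" by blast
  have Mf: "filt M" and FM: "F \<subseteq> M" and MI: "M \<inter> I = {}" using M by auto
  have botI: "bot \<in> I" using I unfolding idl_def by auto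
  have key: "\<exists>p\<in>M. \<exists>i\<in>I. inf p a \<le> i" if "a \<notin> M" for a
  proof (rule ccontr)
    assume n: "\<not> ?thesis"
    let ?Ma = "{x. \<exists>p\<in>M. inf p a \<le> x}"
    have "filt ?Ma" using filt_gen[OF Mf] .
    moreover have "M \<subseteq> ?Ma"
    proof
      fix x assume "x \<in> M"
      moreover have "inf x a \<le> x" by (rule inf_le1)
      ultimately show "x \<in> ?Ma" by blast
    qed
    moreover have "?Ma \<inter> I = {}" using n by blast
    ultimately have "?Ma = M" using max FM by blast
    moreover obtain p where "p \<in> M" using Mf unfolding filt_def by auto
    moreover have "inf p a \<le> a" by (rule inf_le2)
    ultimately have "a \<in> ?Ma" by blast
    then have "a \<in> M" using \<open>?Ma = M\<close> by simp
    then show False using that by blast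
  qed
  have "pfilt M" unfolding pfilt_def
  proof (intro conjI allI impI)
    show "filt M" by fact
    show "bot \<notin> M" using botI MI by blast
  next
    fix a b assume ab: "sup a b \<in> M"
    show "a \<in> M \<or> b \<in> M"
    proof (rule ccontr)
      assume "\<not> (a \<in> M \<or> b \<in> M)"
      then obtain p1 i1 p2 i2 where h: "p1\<in>M" "i1\<in>I" "inf p1 a \<le> i1" "p2\<in>M" "i2\<in>I" "inf p2 b \<le> i2"
        using key by blast
      let ?p = "inf p1 p2"
      have pM: "?p \<in> M" using h Mf unfolding filt_def by blast
      have "inf ?p (sup a b) \<in> M" using pM ab Mf unfolding filt_def by blast
      moreover have "inf ?p (sup a b) = sup (inf ?p a) (inf ?p b)" by (rule inf_sup_distrib1)
      moreover have "inf ?p a \<le> inf p1 a" by (intro inf_mono inf_le1 order_refl)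
      then have "inf ?p a \<le> i1" using h(3) by (rule order_trans)
      moreover have "inf ?p b \<le> inf p2 b" by (intro inf_mono inf_le2 order_refl)
      then have "inf ?p b \<le> i2" using h(6) by (rule order_trans)
      moreover have "sup i1 i2 \<in> I" using h I unfolding idl_def by blast
      moreover have "sup (inf ?p a) (inf ?p b) \<le> sup i1 i2" using \<open>inf ?p a \<le> i1\<close> \<open>inf ?p b \<le> i2\<close> by (rule sup_mono)
      ultimately have "inf ?p (sup a b) \<in> I" using I unfolding idl_def by simp
      then show False using MI \<open>inf ?p (sup a b) \<in> M\<close> by blast
    qed
  qed
  then show ?thesis using FM MI by blast
qed

lemma filt_up: "filt {x::'a::lattice. a \<le> x}"
  unfolding filt_def by auto

lemma idl_down: "idl {x::'a::lattice. x \<le> a}"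
  unfolding idl_def by auto

lemma sep_elem:
  fixes a b :: "'a::{distrib_lattice,bounded_lattice}"
  assumes "\<not> a \<le> b" shows "\<exists>P. pfilt P \<and> a \<in> P \<and> b \<notin> P"
proof -
  have "{x. a \<le> x} \<inter> {x. x \<le> b} = {}" using assms by (auto intro: order_trans)
  from prime_sep[OF filt_up idl_down this] show ?thesis by auto
qed

lemma pfilt_Sup_fin:
  fixes P :: "'a::{distrib_lattice,bounded_lattice} set"
  assumes "pfilt P" "finite A" "A \<noteq> {}" "Sup_fin A \<in> P" shows "\<exists>x\<in>A. x \<in> P"
  using assms(2,3,4)
proof (induction A rule: finite_ne_induct)
  case (singleton x) then show ?case by simp
next
  case (insert x A)
  then have "sup x (Sup_fin A) \<in> P" by simp
  then show ?case using assms(1) insert unfolding pfilt_def by blast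
qed

lemma filt_Inf_fin:
  fixes P :: "'a::lattice set"
  assumes "filt P" "finite A" "A \<noteq> {}" "A \<subseteq> P" shows "Inf_fin A \<in> P"
  using assms(2,3,4)
proof (induction A rule: finite_ne_induct)
  case (singleton x) then show ?case by simp
next
  case (insert x A)
  then show ?case using assms(1) unfolding filt_def by simp
qed

theorem proposition3p9:
  fixes f g :: "'a::{distrib_lattice,bounded_lattice} \<Rightarrow> 'a"
  assumes "bdlgc f g"
  shows "\<exists>(X :: 'a set set) le R h.
           gc_frame X le R \<and> gc_hom f g X le R h \<and> inj h \<and>
           (finite (UNIV :: 'a set) \<longrightarrow> bij_betw h UNIV (upsets X le))"
proof -
  have gc: "\<And>a b. f a \<le> b \<longleftrightarrow> a \<le> g b" using assms unfolding bdlgc_def by blast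
  have fmono: "\<And>a b. a \<le> b \<Longrightarrow> f a \<le> f b"
  proof -
    fix a b :: 'a assume ab: "a \<le> b"
    have "b \<le> g (f b)" using gc[of b "f b"] by simp
    then have "a \<le> g (f b)" using ab by (rule order_trans[rotated])
    then show "f a \<le> f b" using gc by blast
  qed
  have fsup: "\<And>a b. f (sup a b) = sup (f a) (f b)"
  proof -
    fix a b :: 'a
    have "a \<le> g (sup (f a) (f b))" using gc[of a "sup (f a) (f b)"] by simp
    moreover have "b \<le> g (sup (f a) (f b))" using gc[of b "sup (f a) (f b)"] by simp
    ultimately have "sup a b \<le> g (sup (f a) (f b))" by simp
    then have "f (sup a b) \<le> sup (f a) (f b)" using gc by blast
    moreover have "sup (f a) (f b) \<le> f (sup a b)" using fmono by simp
    ultimately show "f (sup a b) = sup (f a) (f b)" by (rule antisym)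
  qed
  have fbot: "f bot = bot" using gc[of bot bot] by (simp add: bot_unique)
  have fg: "\<And>a. f (g a) \<le> a" using gc by blast
  define X where "X = {P::'a set. pfilt P}"
  define le where "le = (\<lambda>P Q. P \<in> X \<and> Q \<in> X \<and> P \<subseteq> Q)"
  define R where "R = (\<lambda>P Q. P \<in> X \<and> Q \<in> X \<and> f ` Q \<subseteq> P)"
  define h where "h = (\<lambda>a. {P\<in>X. a \<in> P})"
  have frame: "gc_frame X le R" unfolding gc_frame_def le_def R_def by blast
  have upd: "\<And>P x y. P \<in> X \<Longrightarrow> x \<in> P \<Longrightarrow> x \<le> y \<Longrightarrow> y \<in> P"
    unfolding X_def pfilt_def filt_def by blast
  have infc: "\<And>P x y. P \<in> X \<Longrightarrow> x \<in> P \<Longrightarrow> y \<in> P \<Longrightarrow> inf x y \<in> P"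
    unfolding X_def pfilt_def filt_def by blast
  have prim: "\<And>P x y. P \<in> X \<Longrightarrow> sup x y \<in> P \<Longrightarrow> x \<in> P \<or> y \<in> P"
    unfolding X_def pfilt_def by blast
  have nbot: "\<And>P. P \<in> X \<Longrightarrow> bot \<notin> P" unfolding X_def pfilt_def by blast
  have topP: "\<And>P. P \<in> X \<Longrightarrow> top \<in> P" unfolding X_def pfilt_def filt_def by auto
  have hf: "h (f a) = btri_up X R (h a)" for a
  proof
    show "h (f a) \<subseteq> btri_up X R (h a)"
    proof
      fix P assume "P \<in> h (f a)"
      then have PX: "P \<in> X" and fa: "f a \<in> P" unfolding h_def by auto
      let ?I = "{x. f x \<notin> P}"
      have "idl ?I" unfolding idl_def
      proof (intro conjI ballI allI impI)
        have "bot \<in> ?I" using fbot nbot[OF PX] by simp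
        then show "?I \<noteq> {}" by blast
      next
        fix x y assume xy: "x \<in> ?I" "y \<le> x"
        show "y \<in> ?I"
        proof
          show "f y \<notin> P"
          proof
            assume "f y \<in> P"
            then have "f x \<in> P" using upd[OF PX] fmono[OF xy(2)] by blast
            then show False using xy(1) by simp
          qed
        qed
      next
        fix x y assume "x \<in> ?I" "y \<in> ?I" then show "sup x y \<in> ?I" using prim[OF PX] fsup by auto
      qed
      moreover have "{x. a \<le> x} \<inter> ?I = {}"
      proof -
        have "f x \<in> P" if "a \<le> x" for x using upd[OF PX fa fmono[OF that]] .
        then show ?thesis by auto
      qed
      ultimately obtain Q where "pfilt Q" "{x. a \<le> x} \<subseteq> Q" "Q \<inter> ?I = {}"
        using prime_sep[OF filt_up] by blast
      then have "Q \<in> X" "a \<in> Q" "f ` Q \<subseteq> P" unfolding X_def by auto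
      then show "P \<in> btri_up X R (h a)" unfolding btri_up_def R_def h_def using PX by blast
    qed
  next
    show "btri_up X R (h a) \<subseteq> h (f a)" unfolding btri_up_def R_def h_def by blast
  qed
  have hg: "h (g a) = btri_down X R (h a)" for a
  proof
    show "h (g a) \<subseteq> btri_down X R (h a)"
    proof
      fix P assume "P \<in> h (g a)"
      then have PX: "P \<in> X" and ga: "g a \<in> P" unfolding h_def by auto
      have "a \<in> Q" if "Q \<in> X" "f ` P \<subseteq> Q" for Q
      proof -
        have "f (g a) \<in> Q" using that ga by blast
        then show ?thesis using upd[OF that(1) _ fg] by blast
      qed
      then show "P \<in> btri_down X R (h a)" unfolding btri_down_def R_def h_def using PX by blast
    qed
  next
    show "btri_down X R (h a) \<subseteq> h (g a)"
    proof
      fix P assume "P \<in> btri_down X R (h a)"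
      then have PX: "P \<in> X" and all: "\<And>Q. Q \<in> X \<Longrightarrow> f ` P \<subseteq> Q \<Longrightarrow> a \<in> Q"
        unfolding btri_down_def R_def h_def by auto
      have "g a \<in> P"
      proof (rule ccontr)
        assume nga: "g a \<notin> P"
        let ?F = "{x. \<exists>p\<in>P. f p \<le> x}"
        have "filt ?F" unfolding filt_def
        proof (intro conjI ballI allI impI)
          have "f top \<in> ?F" using topP[OF PX] by blast
          then show "?F \<noteq> {}" by blast
        next
          fix x y assume "x \<in> ?F" "x \<le> y"
          then obtain p where "p \<in> P" "f p \<le> x" by blast
          have "f p \<le> y" using \<open>f p \<le> x\<close> \<open>x \<le> y\<close> by (rule order_trans)
          with \<open>p \<in> P\<close> show "y \<in> ?F" by blast
        next
          fix x y assume "x \<in> ?F" "y \<in> ?F"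
          then obtain p q where "p \<in> P" "q \<in> P" "f p \<le> x" "f q \<le> y" by blast
          moreover have "f (inf p q) \<le> f p" "f (inf p q) \<le> f q" using fmono by auto
          ultimately have "f (inf p q) \<le> x" "f (inf p q) \<le> y" by (meson order_trans)+
          then have "f (inf p q) \<le> inf x y" by (rule le_infI)
          moreover have "inf p q \<in> P" using infc[OF PX] \<open>p \<in> P\<close> \<open>q \<in> P\<close> by blast
          ultimately show "inf x y \<in> ?F" by blast
        qed
        moreover have "?F \<inter> {x. x \<le> a} = {}"
        proof -
          have False if "p \<in> P" "f p \<le> x" "x \<le> a" for p x
          proof -
            have "f p \<le> a" using that(2,3) by (rule order_trans)
            then have "p \<le> g a" using gc by blast
            then show False using upd[OF PX that(1)] nga by blast
          qed
          then show ?thesis by blast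
        qed
        ultimately obtain Q where "pfilt Q" "?F \<subseteq> Q" "Q \<inter> {x. x \<le> a} = {}"
          using prime_sep[OF _ idl_down] by blast
        then have "Q \<in> X" "f ` P \<subseteq> Q" "a \<notin> Q" unfolding X_def by auto
        then show False using all by blast
      qed
      then show "P \<in> h (g a)" unfolding h_def using PX by blast
    qed
  qed
  have hom: "gc_hom f g X le R h" unfolding gc_hom_def
  proof (intro conjI allI)
    fix a show "h a \<in> upsets X le" unfolding upsets_def h_def le_def by blast
  next
    fix a b
    have "sup a b \<in> P" if "P \<in> X" "a \<in> P" for P using upd[OF that sup_ge1] .
    moreover have "sup a b \<in> P" if "P \<in> X" "b \<in> P" for P using upd[OF that sup_ge2] .
    ultimately show "h (sup a b) = h a \<union> h b" unfolding h_def using prim by blast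
  next
    fix a b
    have "a \<in> P" if "P \<in> X" "inf a b \<in> P" for P using upd[OF that inf_le1] .
    moreover have "b \<in> P" if "P \<in> X" "inf a b \<in> P" for P using upd[OF that inf_le2] .
    ultimately show "h (inf a b) = h a \<inter> h b" unfolding h_def using infc by blast
  next
    fix a show "h (f a) = btri_up X R (h a)" by (rule hf)
  next
    fix a show "h (g a) = btri_down X R (h a)" by (rule hg)
  next
    show "h bot = {}" unfolding h_def using nbot by blast
  next
    show "h top = X" unfolding h_def using topP by blast
  qed
  have sep: "\<And>a b. \<not> a \<le> b \<Longrightarrow> h a \<noteq> h b"
  proof -
    fix a b :: 'a assume "\<not> a \<le> b"
    then obtain P where "pfilt P" "a \<in> P" "b \<notin> P" using sep_elem by blast
    then have "P \<in> h a" "P \<notin> h b" unfolding h_def X_def by auto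
    then show "h a \<noteq> h b" by auto
  qed
  have injh: "inj h"
  proof (rule injI)
    fix a b assume "h a = h b"
    then have "a \<le> b" "b \<le> a" using sep by auto
    then show "a = b" by (rule antisym)
  qed
  have fin: "bij_betw h UNIV (upsets X le)" if finU: "finite (UNIV :: 'a set)"
  proof -
    have img: "h ` UNIV \<subseteq> upsets X le" using hom unfolding gc_hom_def by blast
    have "upsets X le \<subseteq> h ` UNIV"
    proof
      fix U assume U: "U \<in> upsets X le"
      then have UX: "U \<subseteq> X" and Uup: "\<And>P Q. P \<in> U \<Longrightarrow> Q \<in> X \<Longrightarrow> P \<subseteq> Q \<Longrightarrow> Q \<in> U"
        unfolding upsets_def le_def by auto
      define m where "m = (\<lambda>P::'a set. Inf_fin P)"
      have finP: "\<And>P::'a set. finite P" using finU by (meson finite_subset subset_UNIV)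
      have mP: "\<And>P. P \<in> X \<Longrightarrow> m P \<in> P"
      proof -
        fix P assume "P \<in> X"
        then have fP: "filt P" unfolding X_def pfilt_def by simp
        then have "P \<noteq> {}" unfolding filt_def by simp
        then show "m P \<in> P" unfolding m_def using filt_Inf_fin[OF fP finP _ subset_refl] by simp
      qed
      have mle: "\<And>P x. x \<in> P \<Longrightarrow> m P \<le> x" unfolding m_def using finP by (simp add: Inf_fin.coboundedI)
      show "U \<in> h ` UNIV"
      proof (cases "U = {}")
        case True
        then have "U = h bot" using hom unfolding gc_hom_def by simp
        then show ?thesis by blast
      next
        case False
        define a where "a = Sup_fin (m ` U)"
        have finmU: "finite (m ` U)" using finU by (meson finite_subset subset_UNIV)
        have "h a = U"
        proof
          show "U \<subseteq> h a"
          proof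
            fix P assume PU: "P \<in> U"
            then have "m P \<le> a" unfolding a_def using finmU by (simp add: Sup_fin.coboundedI)
            moreover have "P \<in> X" using PU UX by blast
            ultimately have "a \<in> P" using upd mP by blast
            then show "P \<in> h a" unfolding h_def using \<open>P \<in> X\<close> by blast
          qed
        next
          show "h a \<subseteq> U"
          proof
            fix P assume "P \<in> h a"
            then have PX: "P \<in> X" and aP: "a \<in> P" unfolding h_def by auto
            have "pfilt P" using PX unfolding X_def by simp
            then obtain Q where QU: "Q \<in> U" and "m Q \<in> P"
              using pfilt_Sup_fin[OF _ finmU] aP False unfolding a_def by blast
            then have "Q \<subseteq> P" using upd[OF PX \<open>m Q \<in> P\<close> mle] by blast
            then show "P \<in> U" using Uup QU PX by blast
          qed
        qed
        then show ?thesis by blast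
      qed
    qed
    with img have "h ` UNIV = upsets X le" by (rule subset_antisym)
    then show ?thesis using injh unfolding bij_betw_def by simp
  qed
  have "gc_frame X le R \<and> gc_hom f g X le R h \<and> inj h \<and>
           (finite (UNIV :: 'a set) \<longrightarrow> bij_betw h UNIV (upsets X le))"
    using frame hom injh fin by simp
  then show ?thesis by (intro exI)
qed

end
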